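(* Let $d\in\mathbb{N}$, $d\ge1$, and let $\alpha\in E_d$ with $\alpha\neq0$. There exists exactly one quad $(i;a,b,c)$ representing $\alpha$ such that $$d-2f(i+1)<af(i)+bf(i+1)+cf(i+2)\le d,$$ and for this quad $s_d(\alpha)=a+b+c$.
   Context: Let $f\colon\mathbb{Z}\to\mathbb{Z}$ be defined by $f(0)=f(1)=1$, $f(i+2)=f(i+1)+f(i)$ for all $i\in\mathbb{Z}$; $\gamma=(1+\sqrt5)/2$; $\mathbb{Z}[\gamma]=\mathbb{Z}\oplus\mathbb{Z}\gamma^{-1}$. For $d\in\mathbb{N}$, $E_d$ is the set of $\alpha\in\mathbb{Z}[\gamma]$ such that $\alpha=\sum_{k=1}^s\gamma^{-i_k}$ and $\sum_{k=1}^sf(i_k)\le d$ for some $s\in\mathbb{N}$ and integers $0\le i_1\le\dots\le i_s$ (empty sum $=0$); $s_d(\alpha)$ is the largest such $s$. A quad is a tuple $(i;a,b,c)$ of non-negative integers with $a\ge1$; it represents $\alpha$ if $\alpha=a\gamma^{-i}+b\gamma^{-i-1}+c\gamma^{-i-2}$. *)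

theory Defs
  imports Complex_Main
begin

text \<open>The sequence f restricted to nonnegative arguments (only those are used):
  f 0 = f 1 = 1, f (i+2) = f (i+1) + f i.\<close>
fun fibf :: "nat \<Rightarrow> int" where
  "fibf 0 = 1"
| "fibf (Suc 0) = 1"
| "fibf (Suc (Suc n)) = fibf (Suc n) + fibf n"

definition gam :: real where
  "gam = (1 + sqrt 5) / 2"

text \<open>Elements of Z[gamma] are represented as real numbers.
  A d-admissible representation: a non-decreasing list of exponents i_1 <= ... <= i_s
  with alpha = sum gamma^(-i_k) and sum f(i_k) <= d.\<close>
definition admissible_rep :: "nat \<Rightarrow> real \<Rightarrow> nat list \<Rightarrow> bool" where
  "admissible_rep d \<alpha> is \<longleftrightarrow> sorted is \<and>
     \<alpha> = (\<Sum>k\<leftarrow>is. inverse gam ^ k) \<and> (\<Sum>k\<leftarrow>is. fibf k) \<le> int d"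

definition E :: "nat \<Rightarrow> real set" where
  "E d = {\<alpha>. \<exists>is. admissible_rep d \<alpha> is}"

definition s :: "nat \<Rightarrow> real \<Rightarrow> nat" where
  "s d \<alpha> = (GREATEST n. \<exists>is. admissible_rep d \<alpha> is \<and> length is = n)"

definition quad_represents :: "nat \<times> nat \<times> nat \<times> nat \<Rightarrow> real \<Rightarrow> bool" where
  "quad_represents q \<alpha> \<longleftrightarrow> (case q of (i, a, b, c) \<Rightarrow>
     a \<ge> 1 \<and> \<alpha> = real a * inverse gam ^ i + real b * inverse gam ^ (i + 1)
                  + real c * inverse gam ^ (i + 2))"

definition quad_fits :: "nat \<Rightarrow> nat \<times> nat \<times> nat \<times> nat \<Rightarrow> bool" where
  "quad_fits d q \<longleftrightarrow> (case q of (i, a, b, c) \<Rightarrow>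
     int d - 2 * fibf (i + 1) < int a * fibf i + int b * fibf (i + 1) + int c * fibf (i + 2)
     \<and> int a * fibf i + int b * fibf (i + 1) + int c * fibf (i + 2) \<le> int d)"

end

theory Submission imports Defs begin

definition xx :: real where "xx = inverse gam"

lemma gam_sq: "gam^2 = gam + 1"
  unfolding gam_def by (simp add: power2_eq_square field_simps)

lemma gam_gt1: "gam > 1"
proof -
  have "sqrt 5 > 1" by simp
  thus ?thesis unfolding gam_def by simp
qed

lemma xx_pos: "xx > 0" unfolding xx_def using gam_gt1 by simp
lemma xx_lt1: "xx < 1" unfolding xx_def using gam_gt1 by (simp add: inverse_less_1_iff)

lemma xx_sq: "xx^2 = 1 - xx"
proof -
  have g: "gam * xx = 1" unfolding xx_def using gam_gt1 by simp
  have "xx = xx^2 * gam" using g by (simp add: power2_eq_square algebra_simps)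
  hence "xx^2 + xx = xx^2 * (1 + gam)" by (simp add: algebra_simps)
  also have "\<dots> = xx^2 * gam^2" using gam_sq by simp
  also have "\<dots> = (gam * xx)^2" by (simp add: power_mult_distrib)
  also have "\<dots> = 1" using g by simp
  finally show ?thesis by simp
qed

lemma xx_rel: "xx^k = xx^(Suc k) + xx^(Suc (Suc k))"
proof -
  have "xx^(Suc k) + xx^(Suc (Suc k)) = xx^k * (xx + xx^2)" by (simp add: algebra_simps power2_eq_square)
  thus ?thesis using xx_sq by simp
qed

lemma fib_pos: "fibf n \<ge> 1"
  by (induct n rule: fibf.induct) auto

lemma fib_nonneg[simp]: "0 \<le> fibf n" using fib_pos[of n] by simp
lemma fib_gt0[simp]: "0 < fibf n" using fib_pos[of n] by simp

lemma fib_Suc_mono: "fibf n \<le> fibf (Suc n)"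
  by (cases n rule: fibf.cases) (auto simp: fib_pos)

lemma fib_mono: "m \<le> n \<Longrightarrow> fibf m \<le> fibf n"
  by (induct n rule: dec_induct) (auto intro: order_trans fib_Suc_mono)

lemma fib_strict: "1 \<le> n \<Longrightarrow> fibf n < fibf (Suc n)"
  by (cases n rule: fibf.cases) (auto simp: fib_pos)

lemma fib_ge: "int n \<le> fibf n"
  by (induct n rule: fibf.induct) (auto, smt (verit) fib_pos)

lemma fib_le_double: "fibf (Suc n) \<le> 2 * fibf n"
  by (cases n rule: fibf.cases) (auto simp: fib_Suc_mono)

fun pp :: "nat \<Rightarrow> int" where
  "pp 0 = 1" | "pp (Suc 0) = 0" | "pp (Suc (Suc n)) = pp n - pp (Suc n)"
fun qq :: "nat \<Rightarrow> int" where
  "qq 0 = 0" | "qq (Suc 0) = 1" | "qq (Suc (Suc n)) = qq n - qq (Suc n)"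

lemma xx_pq: "xx^k = of_int (pp k) + of_int (qq k) * xx"
proof (induct k rule: pp.induct)
  case (3 n)
  have e: "xx^(Suc (Suc n)) = xx^n - xx^(Suc n)" using xx_rel[of n] by simp
  show ?case by (subst e, simp only: 3, simp add: algebra_simps)
qed auto

definition hom :: "(nat \<Rightarrow> int) \<Rightarrow> bool" where
  "hom v \<longleftrightarrow> (\<forall>k. v k = v (Suc k) + v (Suc (Suc k)))"

lemma hom_pq: "hom v \<Longrightarrow> v k = v 0 * pp k + v 1 * qq k"
proof (induct k rule: pp.induct)
  case (3 n)
  have "v (Suc (Suc n)) = v n - v (Suc n)" using 3(3) unfolding hom_def by (metis add_diff_cancel_left')
  thus ?case using 3 by (simp add: algebra_simps)
qed auto

lemma hom_exists: "\<exists>v. hom v \<and> v i = a \<and> v (Suc i) = b"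
proof (induct i arbitrary: a b)
  case 0
  show ?case by (rule exI[of _ "\<lambda>k. a * pp k + b * qq k"]) (simp add: hom_def algebra_simps)
next
  case (Suc i)
  obtain v where v: "hom v" "v i = a + b" "v (Suc i) = a" using Suc by blast
  have "v i = v (Suc i) + v (Suc (Suc i))" using v(1) unfolding hom_def by blast
  thus ?case using v by auto
qed

lemma irr_nat: "0 < m \<Longrightarrow> xx \<noteq> real r / real m"
proof (induct m arbitrary: r rule: less_induct)
  case (less m)
  show ?case
  proof
    assume h: "xx = real r / real m"
    have "real r / real m > 0" using h xx_pos by simp
    hence "real r > 0" using less(2) by (simp add: zero_less_divide_iff)
    have "real r / real m < 1" using h xx_lt1 by simp
    hence "real r < real m" using less(2) by (simp add: divide_less_eq)
    hence rs: "r < m" by simp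
    have "xx * (1 + xx) = 1" using xx_sq by (simp add: algebra_simps power2_eq_square)
    have rm: "real r = xx * real m" using h less(2) by (simp add: field_simps)
    have "real r * (1+xx) = real m * (xx*(1+xx))" using rm by (simp add: algebra_simps)
    hence "real r * (1+xx) = real m" using \<open>xx * (1 + xx) = 1\<close> by simp
    hence "xx = (real m - real r) / real r" using \<open>real r > 0\<close> by (simp add: field_simps)
    hence "xx = real (m - r) / real r" using rs by (simp add: of_nat_diff)
    thus False using less(1)[OF rs] \<open>real r > 0\<close> by simp
  qed
qed

lemma irr: "of_int a + of_int b * xx = of_int c + of_int d * xx \<Longrightarrow> a = c \<and> b = d"
proof -
  assume h: "of_int a + of_int b * xx = of_int c + of_int d * xx"
  show ?thesis
  proof (cases "b = d")
    case True thus ?thesis using h by simp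
  next
    case False
    hence x: "xx = of_int (a - c) / of_int (d - b)" using h by (simp add: field_simps)
    hence "xx = \<bar>of_int (a - c) / of_int (d - b)\<bar>" using xx_pos by simp
    hence "xx = real (nat \<bar>a - c\<bar>) / real (nat \<bar>d - b\<bar>)" by (simp add: abs_divide)
    moreover have "0 < nat \<bar>d - b\<bar>" using False by simp
    ultimately show ?thesis using irr_nat by blast
  qed
qed


definition val :: "nat list \<Rightarrow> real" where "val xs = (\<Sum>k\<leftarrow>xs. xx^k)"
definition cost :: "nat list \<Rightarrow> int" where "cost xs = (\<Sum>k\<leftarrow>xs. fibf k)"
definition Sv :: "(nat \<Rightarrow> int) \<Rightarrow> nat list \<Rightarrow> int" where "Sv v xs = (\<Sum>k\<leftarrow>xs. v k)"
definition PP :: "nat list \<Rightarrow> int" where "PP xs = (\<Sum>k\<leftarrow>xs. pp k)"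
definition QQ :: "nat list \<Rightarrow> int" where "QQ xs = (\<Sum>k\<leftarrow>xs. qq k)"

lemma val_PQ: "val xs = of_int (PP xs) + of_int (QQ xs) * xx"
proof (induct xs)
  case (Cons a xs)
  have "xx^a = of_int (pp a) + of_int (qq a) * xx" by (rule xx_pq)
  thus ?case using Cons by (simp add: val_def PP_def QQ_def algebra_simps del: power_Suc)
qed (simp add: val_def PP_def QQ_def)

lemma Sv_PQ: "hom v \<Longrightarrow> Sv v xs = v 0 * PP xs + v 1 * QQ xs"
proof (induct xs)
  case (Cons a xs)
  have "v a = v 0 * pp a + v 1 * qq a" using Cons(2) by (rule hom_pq)
  thus ?case using Cons by (simp add: Sv_def PP_def QQ_def algebra_simps)
qed (simp add: Sv_def PP_def QQ_def)

lemma inv: "hom v \<Longrightarrow> val xs = val ys \<Longrightarrow> Sv v xs = Sv v ys"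
proof -
  assume h: "hom v" "val xs = val ys"
  have "PP xs = PP ys \<and> QQ xs = QQ ys" using h(2) val_PQ irr by metis
  thus ?thesis using Sv_PQ[OF h(1)] by simp
qed

lemma sum_ge: "(\<And>k. k \<in> set xs \<Longrightarrow> M \<le> v k + fibf k) \<Longrightarrow> M * int (length xs) \<le> Sv v xs + cost xs"
proof (induct xs)
  case (Cons a xs)
  have "M \<le> v a + fibf a" using Cons(2) by simp
  moreover have "M * int (length xs) \<le> Sv v xs + cost xs" using Cons by simp
  ultimately show ?case by (simp add: Sv_def cost_def algebra_simps)
qed (simp add: Sv_def cost_def)

lemma abs_le: "(\<And>k. \<bar>v k\<bar> \<le> fibf k) \<Longrightarrow> \<bar>Sv v xs\<bar> \<le> cost xs"
proof (induct xs)
  case (Cons a xs)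
  have "\<bar>v a\<bar> \<le> fibf a" using Cons(2) by simp
  moreover have "\<bar>Sv v xs\<bar> \<le> cost xs" using Cons by simp
  ultimately show ?case by (simp add: Sv_def cost_def abs_le_iff)
qed (simp add: Sv_def cost_def)

lemma hom_step: "hom v \<Longrightarrow> v (Suc (Suc k)) = v k - v (Suc k)"
  unfolding hom_def by (metis add_diff_cancel_left')

lemma hom_signed: "hom (\<lambda>k. (-1)^k * fibf k)"
  unfolding hom_def by (auto simp: algebra_simps)

lemma hom01_bound:
  assumes "hom v" "v 0 = 1" "v 1 = 1"
  shows "\<bar>v k\<bar> \<le> fibf k"
proof (induct k rule: pp.induct)
  case (3 n)
  have "v (Suc (Suc n)) = v n - v (Suc n)" using hom_step[OF assms(1)] .
  moreover have "\<bar>v n - v (Suc n)\<bar> \<le> \<bar>v n\<bar> + \<bar>v (Suc n)\<bar>" by (rule abs_triangle_ineq4)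
  ultimately show ?case using 3(1,2) by simp
qed (use assms in simp_all)

lemma pot:
  assumes hv: "hom v" and vi: "v i = 2 * fibf (Suc i) - fibf i" and vi1: "v (Suc i) = fibf (Suc i)"
  shows "2 * fibf (Suc i) \<le> v k + fibf k" and "k < i \<Longrightarrow> 2 * fibf (Suc i) < v k + fibf k"
proof -
  define F where "F = fibf (Suc i)"
  have st: "\<And>k. v (Suc (Suc k)) = v k - v (Suc k)" using hom_step[OF hv] .
  have v2: "v (Suc (Suc i)) = F - fibf i" using st[of i] vi vi1 F_def by simp
  have v3: "v (Suc (Suc (Suc i))) = fibf i" using st[of "Suc i"] v2 vi1 F_def by simp
  have Ffi: "fibf i \<le> F" unfolding F_def by (rule fib_Suc_mono)
  have fw: "\<bar>v (i+3+m)\<bar> \<le> fibf (i+m) \<and> \<bar>v (i+4+m)\<bar> \<le> fibf (i+m+1)" for m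
  proof (induct m)
    case 0
    have "v (i+4) = v (i+2) - v (i+3)" using st[of "i+2"] by (simp add: numeral_eq_Suc)
    hence "v (i+4) = F - 2 * fibf i" using v2 v3 by (simp add: numeral_eq_Suc)
    moreover have "F = fibf (i+1)" using F_def by simp
    ultimately show ?case using v3 Ffi by (simp add: numeral_eq_Suc abs_le_iff)
  next
    case (Suc m)
    have "v (i+5+m) = v (i+3+m) - v (i+4+m)" using st[of "i+3+m"] by (simp add: numeral_eq_Suc)
    moreover have "fibf (i+m+2) = fibf (i+m+1) + fibf (i+m)" by (simp add: numeral_eq_Suc)
    ultimately show ?case using Suc by (simp add: numeral_eq_Suc) linarith
  qed
  have fwd: "2 * F \<le> v k + fibf k" if ik: "i \<le> k" for k
  proof -
    consider "k = i" | "k = Suc i" | "k = Suc (Suc i)" | m where "k = i+3+m"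
    proof -
      have "k = i \<or> k = Suc i \<or> k = Suc (Suc i) \<or> k = i + 3 + (k - i - 3)" using ik by arith
      thus ?thesis using that by blast
    qed
    thus ?thesis
    proof cases
      case 1 thus ?thesis using vi F_def by simp
    next
      case 2 thus ?thesis using vi1 F_def fib_Suc_mono[of i] by simp
    next
      case 3 thus ?thesis using v2 F_def by simp
    next
      case 4
      have "\<bar>v k\<bar> \<le> fibf (i+m)" using fw[of m] 4 by simp
      moreover have "fibf k = 2 * fibf (i+m+1) + fibf (i+m)" using 4 by (simp add: numeral_eq_Suc)
      moreover have "F \<le> fibf (i+m+1)" using F_def fib_mono[of "Suc i" "i+m+1"] by simp
      ultimately show ?thesis by linarith
    qed
  qed
  define U where "U k = v k + fibf k" for k
  have Urec: "U k = U (Suc k) + U (Suc (Suc k)) - 2 * fibf (Suc k)" for k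
  proof -
    have "v k = v (Suc k) + v (Suc (Suc k))" using hv unfolding hom_def by blast
    thus ?thesis unfolding U_def by simp
  qed
  have bw: "U (Suc n) \<le> U n \<and> 2 * F \<le> U (Suc n) \<and> (n < i \<longrightarrow> 2 * F < U n)" if "n \<le> i" for n
    using that
  proof (induct n rule: inc_induct)
    case base
    show ?case using vi vi1 F_def U_def fwd[of "Suc i"] by simp
  next
    case (step n)
    have a: "U (Suc (Suc n)) \<ge> 2 * F" using step(3) by simp
    have b: "U (Suc n) \<ge> 2 * F" using step(3) by linarith
    have "fibf (Suc n) \<le> fibf i" using step(2) fib_mono by simp
    moreover have "fibf i < F" using F_def fib_strict[of i] step by simp
    ultimately have "U n > U (Suc n)" using Urec[of n] a by linarith
    thus ?case using b by simp
  qed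
  show "2 * F \<le> v k + fibf k" for k
  proof (cases "i \<le> k")
    case True thus ?thesis using fwd by blast
  next
    case False thus ?thesis using bw[of k] U_def by simp
  qed
  show "2 * F < v k + fibf k" if "k < i" for k using bw[of k] that U_def by simp
qed


definition ql :: "nat \<Rightarrow> nat \<Rightarrow> nat \<Rightarrow> nat \<Rightarrow> nat list" where
  "ql i a b c = replicate a i @ replicate b (Suc i) @ replicate c (Suc (Suc i))"

lemma ql_val: "val (ql i a b c) = real a * xx^i + real b * xx^(Suc i) + real c * xx^(Suc (Suc i))"
  unfolding val_def ql_def by (simp add: sum_list_replicate del: power_Suc)

lemma ql_cost: "cost (ql i a b c) = int a * fibf i + int b * fibf (Suc i) + int c * fibf (Suc (Suc i))"
  unfolding cost_def ql_def by (simp add: sum_list_replicate del: fibf.simps)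

lemma ql_Sv: "Sv v (ql i a b c) = int a * v i + int b * v (Suc i) + int c * v (Suc (Suc i))"
  unfolding Sv_def ql_def by (simp add: sum_list_replicate)

lemma ql_len: "length (ql i a b c) = a + b + c" unfolding ql_def by simp

lemma ql_sorted: "sorted (ql i a b c)"
  unfolding ql_def by (auto simp: sorted_append)

lemma qr_iff: "quad_represents (i,a,b,c) \<alpha> \<longleftrightarrow> 1 \<le> a \<and> \<alpha> = val (ql i a b c)"
  unfolding quad_represents_def ql_val xx_def by simp

lemma qf_iff: "quad_fits d (i,a,b,c) \<longleftrightarrow> int d - 2 * fibf (Suc i) < cost (ql i a b c) \<and> cost (ql i a b c) \<le> int d"
  unfolding quad_fits_def ql_cost by simp

lemma quad_U: "Sv v (ql i a b c) + cost (ql i a b c) =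
   int a * (v i + fibf i) + int b * (v (Suc i) + fibf (Suc i)) + int c * (v (Suc (Suc i)) + fibf (Suc (Suc i)))"
  unfolding ql_Sv ql_cost by (simp add: algebra_simps del: fibf.simps)

lemma pot_exists: "\<exists>v. hom v \<and> v i = 2 * fibf (Suc i) - fibf i \<and> v (Suc i) = fibf (Suc i)"
  by (rule hom_exists)

lemma pot_quad:
  assumes "hom v" "v i = 2 * fibf (Suc i) - fibf i" "v (Suc i) = fibf (Suc i)"
  shows "Sv v (ql i a b c) + cost (ql i a b c) = 2 * fibf (Suc i) * int (a + b + c)"
proof -
  have "v (Suc (Suc i)) = v i - v (Suc i)" using hom_step[OF assms(1)] .
  hence e3: "v (Suc (Suc i)) + fibf (Suc (Suc i)) = 2 * fibf (Suc i)" using assms(2,3) by simp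
  have e1: "v i + fibf i = 2 * fibf (Suc i)" using assms(2) by simp
  have e2: "v (Suc i) + fibf (Suc i) = 2 * fibf (Suc i)" using assms(3) by simp
  show ?thesis unfolding quad_U e1 e2 e3 by (simp add: algebra_simps)
qed

lemma opt:
  assumes "val ys = val (ql i a b c)" "cost ys \<le> int d"
    "int d - 2 * fibf (Suc i) < cost (ql i a b c)"
  shows "length ys \<le> a + b + c"
proof -
  define F where "F = fibf (Suc i)"
  obtain v where v: "hom v" "v i = 2 * F - fibf i" "v (Suc i) = F"
    using pot_exists F_def by blast
  have "2 * F * int (length ys) \<le> Sv v ys + cost ys"
    by (rule sum_ge) (use pot(1)[OF v[unfolded F_def]] F_def in auto)
  moreover have "Sv v ys = Sv v (ql i a b c)" using inv[OF v(1) assms(1)] .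
  moreover have "Sv v (ql i a b c) + cost (ql i a b c) = 2 * F * int (a + b + c)"
    using pot_quad[OF v[unfolded F_def]] F_def by simp
  ultimately have "2 * F * int (length ys) < 2 * F * int (a + b + c + 1)"
    using assms(2,3) F_def by (simp add: algebra_simps)
  moreover have "0 < 2 * F" using F_def by simp
  ultimately have "int (length ys) < int (a + b + c + 1)"
    using mult_less_cancel_left_pos by blast
  thus ?thesis by simp
qed


lemma uniq_same:
  assumes "val (ql i a b c) = val (ql i a' b' c')"
    "int d - 2 * fibf (Suc i) < cost (ql i a b c)" "cost (ql i a b c) \<le> int d"
    "int d - 2 * fibf (Suc i) < cost (ql i a' b' c')" "cost (ql i a' b' c') \<le> int d"
  shows "a = a' \<and> b = b' \<and> c = c'"
proof -
  have "xx^i * (real a + real b * xx + real c * xx^2) = xx^i * (real a' + real b' * xx + real c' * xx^2)"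
    using assms(1) unfolding ql_val by (simp add: algebra_simps power2_eq_square)
  hence "real a + real b * xx + real c * xx^2 = real a' + real b' * xx + real c' * xx^2"
    using xx_pos by simp
  hence "of_int (int a + int c) + of_int (int b - int c) * xx = of_int (int a' + int c') + of_int (int b' - int c') * xx"
    unfolding xx_sq by (simp add: algebra_simps)
  hence e: "int a + int c = int a' + int c'" "int b - int c = int b' - int c'" using irr by blast+
  define t where "t = int c - int c'"
  define F where "F = fibf (Suc i)"
  have "cost (ql i a b c) - cost (ql i a' b' c') = (int a - int a') * fibf i + (int b - int b') * F + (int c - int c') * (F + fibf i)"
    unfolding ql_cost F_def by (simp add: algebra_simps)
  also have "\<dots> = t * (2 * F)"
  proof -
    have ea: "int a - int a' = - t" and eb: "int b - int b' = t" and ec: "int c - int c' = t"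
      using e unfolding t_def by linarith+
    show ?thesis unfolding ea eb ec by (simp add: algebra_simps)
  qed
  finally have cd: "cost (ql i a b c) - cost (ql i a' b' c') = t * (2 * F)" .
  have F0: "0 < 2 * F" using F_def by simp
  have "t * (2 * F) < 2 * F" using cd assms(2-5) F_def by linarith
  hence "t * (2 * F) < 1 * (2 * F)" by simp
  hence "t < 1" using F0 mult_less_cancel_right_pos by blast
  moreover have "- (2 * F) < t * (2 * F)" using cd assms(2-5) F_def by linarith
  hence "(-1) * (2 * F) < t * (2 * F)" by simp
  hence "-1 < t" using F0 mult_less_cancel_right_pos by blast
  ultimately have "t = 0" by simp
  thus ?thesis using e t_def by simp
qed

lemma uniq_lt:
  assumes "i < j" "1 \<le> a" "1 \<le> a'" "val (ql i a b c) = val (ql j a' b' c')"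
    "int d - 2 * fibf (Suc i) < cost (ql i a b c)" "cost (ql i a b c) \<le> int d"
    "int d - 2 * fibf (Suc j) < cost (ql j a' b' c')" "cost (ql j a' b' c') \<le> int d"
  shows False
proof -
  have l1: "a + b + c \<le> a' + b' + c'" using opt[OF assms(4) assms(6) assms(7)] ql_len by simp
  have l2: "a' + b' + c' \<le> a + b + c" using opt[OF assms(4)[symmetric] assms(8) assms(5)] ql_len by simp
  define n where "n = a + b + c"
  have n': "a' + b' + c' = n" using l1 l2 n_def by simp
  define C1 where "C1 = cost (ql i a b c)"
  define C2 where "C2 = cost (ql j a' b' c')"
  obtain w where w: "hom w" "w j = 2 * fibf (Suc j) - fibf j" "w (Suc j) = fibf (Suc j)"
    using pot_exists by blast
  define F' where "F' = fibf (Suc j)"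
  have q2w: "Sv w (ql j a' b' c') + C2 = 2 * F' * int n" using pot_quad[OF w] n' C2_def F'_def by simp
  have Ui: "2 * F' < w i + fibf i" using pot(2)[OF w assms(1)] F'_def by simp
  have U1: "2 * F' \<le> w (Suc i) + fibf (Suc i)" using pot(1)[OF w] F'_def by simp
  have U2: "2 * F' \<le> w (Suc (Suc i)) + fibf (Suc (Suc i))" using pot(1)[OF w, of "Suc (Suc i)"] F'_def by (simp del: fibf.simps)
  have "int a * (2 * F') < int a * (w i + fibf i)" using Ui assms(2) by simp
  moreover have "int b * (2 * F') \<le> int b * (w (Suc i) + fibf (Suc i))" using U1 by (simp add: mult_left_mono)
  moreover have "int c * (2 * F') \<le> int c * (w (Suc (Suc i)) + fibf (Suc (Suc i)))" using U2 by (simp add: mult_left_mono)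
  ultimately have "2 * F' * int n < Sv w (ql i a b c) + C1"
    unfolding C1_def quad_U n_def by (simp add: algebra_simps)
  moreover have "Sv w (ql i a b c) = Sv w (ql j a' b' c')" using inv[OF w(1) assms(4)] .
  ultimately have c21: "C2 < C1" using q2w by simp
  obtain v where v: "hom v" "v i = 2 * fibf (Suc i) - fibf i" "v (Suc i) = fibf (Suc i)"
    using pot_exists by blast
  have q1v: "Sv v (ql i a b c) + C1 = 2 * fibf (Suc i) * int n" using pot_quad[OF v] n_def C1_def by simp
  have "2 * fibf (Suc i) * int (length (ql j a' b' c')) \<le> Sv v (ql j a' b' c') + C2"
    unfolding C2_def by (rule sum_ge) (use pot(1)[OF v] in auto)
  moreover have "Sv v (ql i a b c) = Sv v (ql j a' b' c')" using inv[OF v(1) assms(4)] .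
  ultimately have "C1 \<le> C2" using q1v n' ql_len by simp
  thus False using c21 by simp
qed


definition gg :: "nat \<Rightarrow> int" where "gg m = (if m = 0 then 0 else fibf (m - 1))"

lemma xx_inv: "xx * (1 + xx) = 1" using xx_sq by (simp add: algebra_simps power2_eq_square)

lemma fib_gg: "fibf (Suc m) = fibf m + gg m"
  by (cases m) (auto simp: gg_def)

lemma xx_shift: "xx^k = xx^(k+m) * (of_int (fibf m) + of_int (gg m) * xx)"
proof (induct m)
  case 0 thus ?case by (simp add: gg_def)
next
  case (Suc m)
  have "xx^(k + Suc m) * (1 + xx) = xx^(k+m) * (xx * (1 + xx))" by (simp add: algebra_simps)
  hence e: "xx^(k+m) = xx^(k + Suc m) * (1 + xx)" using xx_inv by simp
  have "(1 + xx) * (of_int (fibf m) + of_int (gg m) * xx)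
      = of_int (fibf m) + of_int (fibf m + gg m) * xx + of_int (gg m) * xx^2"
    by (simp add: algebra_simps power2_eq_square)
  also have "\<dots> = of_int (fibf (Suc m)) + of_int (gg (Suc m)) * xx"
    unfolding xx_sq fib_gg by (simp add: gg_def algebra_simps)
  finally show ?case using Suc e by (simp add: mult.assoc del: power_Suc fibf.simps)
qed

lemma val_top: "(\<forall>k\<in>set xs. k \<le> K) \<Longrightarrow>
  val xs = xx^K * (of_int (\<Sum>k\<leftarrow>xs. fibf (K - k)) + of_int (\<Sum>k\<leftarrow>xs. gg (K - k)) * xx)"
proof (induct xs)
  case Nil thus ?case by (simp add: val_def)
next
  case (Cons a xs)
  have "xx^a = xx^K * (of_int (fibf (K - a)) + of_int (gg (K - a)) * xx)"
    using xx_shift[of a "K - a"] Cons(2) by simp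
  thus ?case using Cons by (simp add: val_def algebra_simps del: power_Suc fibf.simps)
qed

lemma gg_nonneg: "0 \<le> gg m" by (simp add: gg_def)

lemma sum_list_pos: "xs \<noteq> [] \<Longrightarrow> 1 \<le> (\<Sum>k\<leftarrow>xs. fibf (K - k))"
proof (induct xs)
  case (Cons a xs)
  have "0 \<le> (\<Sum>k\<leftarrow>xs. fibf (K - k))" by (induct xs) auto
  thus ?case using fib_pos[of "K - a"] by simp
qed simp

lemma sum_list_nonneg_gg: "0 \<le> (\<Sum>k\<leftarrow>xs. gg (K - k))"
  by (induct xs) (auto simp: gg_nonneg)

lemma feasible_top:
  assumes "xs \<noteq> []"
  shows "\<exists>a b c. quad_represents (Max (set xs), a, b, c) (val xs)"
proof -
  define K where "K = Max (set xs)"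
  have "\<forall>k\<in>set xs. k \<le> K" unfolding K_def by simp
  from val_top[OF this] have v: "val xs = xx^K * (of_int (\<Sum>k\<leftarrow>xs. fibf (K - k)) + of_int (\<Sum>k\<leftarrow>xs. gg (K - k)) * xx)" .
  define A where "A = (\<Sum>k\<leftarrow>xs. fibf (K - k))"
  define B where "B = (\<Sum>k\<leftarrow>xs. gg (K - k))"
  have A1: "1 \<le> A" using sum_list_pos[OF assms] A_def by simp
  have B0: "0 \<le> B" using sum_list_nonneg_gg B_def by simp
  have "val (ql K (nat A) (nat B) 0) = val xs"
    unfolding ql_val v A_def[symmetric] B_def[symmetric] using A1 B0 by (simp add: algebra_simps)
  moreover have "1 \<le> nat A" using A1 by simp
  ultimately show ?thesis unfolding qr_iff K_def[symmetric] by metis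
qed

lemma merge_val:
  assumes "t \<le> b" "t \<le> c"
  shows "val (ql i (a + t) (b - t) (c - t)) = val (ql i a b c)"
proof -
  have "xx^i = xx^(Suc i) + xx^(Suc (Suc i))" by (rule xx_rel)
  thus ?thesis unfolding ql_val using assms by (simp add: of_nat_diff algebra_simps del: power_Suc)
qed

lemma down_val:
  assumes "m \<le> a" "m \<le> b"
  shows "val (ql j m (a - m) (b - m)) = val (ql (Suc j) a b 0)"
proof -
  have "xx^j = xx^(Suc j) + xx^(Suc (Suc j))" by (rule xx_rel)
  thus ?thesis unfolding ql_val using assms by (simp add: of_nat_diff algebra_simps del: power_Suc)
qed

lemma exists_cheap:
  assumes "xs \<noteq> []"
  shows "\<exists>i a b c. quad_represents (i, a, b, c) (val xs) \<and> cost (ql i a b c) \<le> cost xs"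
proof -
  define \<alpha> where "\<alpha> = val xs"
  define feas where "feas i \<longleftrightarrow> (\<exists>a b c. quad_represents (i, a, b, c) \<alpha>)" for i
  have "feas (Max (set xs))" using feasible_top[OF assms] unfolding feas_def \<alpha>_def .
  hence f0: "feas (LEAST i. feas i)" by (rule LeastI)
  define i0 where "i0 = (LEAST i. feas i)"
  obtain a b c where q: "quad_represents (i0, a, b, c) \<alpha>" using f0 unfolding feas_def i0_def by blast
  define t where "t = min b c"
  define a1 where "a1 = a + t"
  define b1 where "b1 = b - t"
  define c1 where "c1 = c - t"
  have q1: "quad_represents (i0, a1, b1, c1) \<alpha>"
    using q merge_val[of t b c i0 a] unfolding qr_iff a1_def b1_def c1_def t_def by simp
  have bc: "b1 = 0 \<or> c1 = 0" unfolding b1_def c1_def t_def by (cases "b \<le> c") (auto simp: min_def)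
  have av: "\<alpha> = val (ql i0 a1 b1 c1)" "1 \<le> a1" using q1 qr_iff by auto
  show ?thesis
  proof (cases "b1 = 0")
    case True
    define vs where "vs k = (-1)^k * fibf k" for k
    have hvs: "hom vs" using hom_signed unfolding vs_def .
    have "Sv vs (ql i0 a1 b1 c1) = (-1)^i0 * cost (ql i0 a1 b1 c1)"
      unfolding ql_Sv ql_cost vs_def using True by (simp add: algebra_simps)
    moreover have "0 \<le> cost (ql i0 a1 b1 c1)" unfolding ql_cost by simp
    ultimately have "cost (ql i0 a1 b1 c1) = \<bar>Sv vs (ql i0 a1 b1 c1)\<bar>"
      by (simp add: abs_mult power_abs)
    also have "\<dots> = \<bar>Sv vs xs\<bar>" using inv[OF hvs, of "ql i0 a1 b1 c1" xs] av \<alpha>_def by simp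
    also have "\<dots> \<le> cost xs" by (rule abs_le) (simp add: vs_def abs_mult power_abs)
    finally show ?thesis using q1 \<alpha>_def by blast
  next
    case False
    hence c0: "c1 = 0" using bc by simp
    show ?thesis
    proof (cases i0)
      case 0
      obtain v where v: "hom v" "v 0 = 1" "v (Suc 0) = 1" using hom_exists[of 0 1 1] by auto
      have "cost (ql i0 a1 b1 c1) = Sv v (ql i0 a1 b1 c1)"
        unfolding ql_Sv ql_cost using 0 c0 v by simp
      also have "\<dots> = Sv v xs" using inv[OF v(1), of "ql i0 a1 b1 c1" xs] av \<alpha>_def by simp
      also have "\<dots> \<le> \<bar>Sv v xs\<bar>" by simp
      also have "\<dots> \<le> cost xs" by (rule abs_le) (rule hom01_bound, use v in auto)
      finally show ?thesis using q1 \<alpha>_def by blast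
    next
      case (Suc j)
      define m where "m = min a1 b1"
      have "val (ql j m (a1 - m) (b1 - m)) = val (ql (Suc j) a1 b1 0)"
        by (rule down_val) (auto simp: m_def)
      hence "quad_represents (j, m, a1 - m, b1 - m) \<alpha>"
        unfolding qr_iff using av Suc c0 False m_def by simp
      hence "feas j" unfolding feas_def by blast
      moreover have "j < i0" using Suc by simp
      ultimately show ?thesis using not_less_Least unfolding i0_def by blast
    qed
  qed
qed


definition qc :: "nat \<times> nat \<times> nat \<times> nat \<Rightarrow> int" where
  "qc q = (case q of (i, a, b, c) \<Rightarrow> cost (ql i a b c))"

lemma exists_fit:
  assumes "quad_represents (i0, a0, b0, c0) \<alpha>" "cost (ql i0 a0 b0 c0) \<le> int d"
  shows "\<exists>q. quad_represents q \<alpha> \<and> quad_fits d q"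
proof -
  define P where "P q \<longleftrightarrow> quad_represents q \<alpha> \<and> qc q \<le> int d" for q
  have P0: "P (i0, a0, b0, c0)" using assms unfolding P_def qc_def by simp
  have "\<forall>y. P y \<longrightarrow> nat (qc y) < d + 1" unfolding P_def by auto
  from ex_has_greatest_nat[of P, OF P0 this]
  obtain q where qm: "P q" "\<And>y. P y \<Longrightarrow> nat (qc y) \<le> nat (qc q)" by blast
  obtain i a b c where qq: "q = (i, a, b, c)" by (cases q) auto
  have r: "1 \<le> a" "\<alpha> = val (ql i a b c)" and cd: "cost (ql i a b c) \<le> int d"
    using qm(1) unfolding P_def qq qr_iff qc_def by auto
  have c0: "0 \<le> cost (ql i a b c)" unfolding ql_cost by simp
  have "quad_fits d (i, a, b, c)"
  proof (rule ccontr)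
    assume "\<not> quad_fits d (i, a, b, c)"
    hence lo: "cost (ql i a b c) \<le> int d - 2 * fibf (Suc i)" using cd unfolding qf_iff by simp
    obtain q' where q': "P q'" "qc q' = cost (ql i a b c) + 2 * fibf (Suc i)"
    proof (cases "a = 1")
      case True
      have "val (ql (Suc i) (Suc b) (Suc c) 0) = val (ql i a b c)"
        unfolding ql_val using True xx_rel[of i] by (simp add: algebra_simps del: power_Suc)
      moreover have "cost (ql (Suc i) (Suc b) (Suc c) 0) = cost (ql i a b c) + 2 * fibf (Suc i)"
        unfolding ql_cost using True by (simp add: algebra_simps)
      ultimately show ?thesis using that[of "(Suc i, Suc b, Suc c, 0)"] r lo
        unfolding P_def qc_def qr_iff by simp
    next
      case False
      have "val (ql i (a - 1) (Suc b) (Suc c)) = val (ql i a b c)"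
        unfolding ql_val using False r(1) xx_rel[of i] by (simp add: of_nat_diff algebra_simps del: power_Suc)
      moreover have "cost (ql i (a - 1) (Suc b) (Suc c)) = cost (ql i a b c) + 2 * fibf (Suc i)"
        unfolding ql_cost using False r(1) by (simp add: of_nat_diff algebra_simps)
      ultimately show ?thesis using that[of "(i, a - 1, Suc b, Suc c)"] r lo False
        unfolding P_def qc_def qr_iff by simp
    qed
    have "nat (qc q') \<le> nat (qc q)" using qm(2)[OF q'(1)] .
    moreover have "qc q = cost (ql i a b c)" unfolding qq qc_def by simp
    ultimately have "nat (qc q') \<le> nat (qc q) \<and> qc q = cost (ql i a b c)" by simp
    moreover have "0 < fibf (Suc i)" by simp
    ultimately have "qc q' \<le> qc q" using q'(2) c0 nat_le_eq_zle by force
    thus False using q'(2) \<open>qc q = cost (ql i a b c)\<close> \<open>0 < fibf (Suc i)\<close> by linarith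
  qed
  thus ?thesis using qm(1) unfolding P_def qq by blast
qed

theorem mainTheorem17:
  fixes d :: nat and \<alpha> :: real
  assumes "d \<ge> 1" and "\<alpha> \<in> E d" and "\<alpha> \<noteq> 0"
  shows "(\<exists>!q. quad_represents q \<alpha> \<and> quad_fits d q) \<and>
         (\<forall>i a b c. quad_represents (i, a, b, c) \<alpha> \<and> quad_fits d (i, a, b, c)
             \<longrightarrow> s d \<alpha> = a + b + c)"
proof -
  have adm: "admissible_rep d \<alpha> xs \<longleftrightarrow> sorted xs \<and> \<alpha> = val xs \<and> cost xs \<le> int d" for xs
    unfolding admissible_rep_def val_def cost_def xx_def by simp
  obtain xs0 where "admissible_rep d \<alpha> xs0" using assms(2) unfolding E_def by blast
  then obtain xs where xs: "sorted xs" "\<alpha> = val xs" "cost xs \<le> int d"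
    unfolding adm by blast
  have ne: "xs \<noteq> []" using xs(2) assms(3) by (auto simp: val_def)
  obtain i0 a0 b0 c0 where q0: "quad_represents (i0, a0, b0, c0) \<alpha>" "cost (ql i0 a0 b0 c0) \<le> cost xs"
    using exists_cheap[OF ne] xs(2) by blast
  have ex: "\<exists>q. quad_represents q \<alpha> \<and> quad_fits d q"
    by (rule exists_fit[OF q0(1)]) (use q0(2) xs(3) in simp)
  have un: "q1 = q2" if h1: "quad_represents q1 \<alpha> \<and> quad_fits d q1" and h2: "quad_represents q2 \<alpha> \<and> quad_fits d q2" for q1 q2
  proof -
    obtain i a b c where e1: "q1 = (i, a, b, c)" by (cases q1) auto
    obtain j a' b' c' where e2: "q2 = (j, a', b', c')" by (cases q2) auto
    have A: "1 \<le> a" "\<alpha> = val (ql i a b c)" "int d - 2 * fibf (Suc i) < cost (ql i a b c)" "cost (ql i a b c) \<le> int d"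
      using h1 unfolding e1 qr_iff qf_iff by auto
    have B: "1 \<le> a'" "\<alpha> = val (ql j a' b' c')" "int d - 2 * fibf (Suc j) < cost (ql j a' b' c')" "cost (ql j a' b' c') \<le> int d"
      using h2 unfolding e2 qr_iff qf_iff by auto
    have V: "val (ql i a b c) = val (ql j a' b' c')" using A(2) B(2) by simp
    consider "i < j" | "j < i" | "i = j" by linarith
    thus ?thesis
    proof cases
      case 1 thus ?thesis using uniq_lt[OF 1 A(1) B(1) V A(3,4) B(3,4)] by simp
    next
      case 2 thus ?thesis using uniq_lt[OF 2 B(1) A(1) V[symmetric] B(3,4) A(3,4)] by simp
    next
      case 3 thus ?thesis using uniq_same[of i a b c a' b' c' d] V A(3,4) B(3,4) e1 e2 by simp
    qed
  qed
  have sv: "s d \<alpha> = a + b + c" if h: "quad_represents (i, a, b, c) \<alpha> \<and> quad_fits d (i, a, b, c)" for i a b c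
  proof -
    have A: "\<alpha> = val (ql i a b c)" "int d - 2 * fibf (Suc i) < cost (ql i a b c)" "cost (ql i a b c) \<le> int d"
      using h unfolding qr_iff qf_iff by auto
    show ?thesis unfolding s_def
    proof (rule Greatest_equality)
      show "\<exists>is. admissible_rep d \<alpha> is \<and> length is = a + b + c"
        using A ql_sorted ql_len unfolding adm by blast
    next
      fix y assume "\<exists>is. admissible_rep d \<alpha> is \<and> length is = y"
      then obtain ys where ys: "sorted ys" "\<alpha> = val ys" "cost ys \<le> int d" "length ys = y"
        unfolding adm by blast
      have "val ys = val (ql i a b c)" using ys(2) A(1) by simp
      from opt[OF this ys(3) A(2)] show "y \<le> a + b + c" using ys(4) by simp
    qed
  qed
  show ?thesis using ex un sv by blast
qed

end
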